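(* Let $(a_n(q))$ be a $q$-Euler–Gauss sequence and $N\ge1$ an integer. If $a_d(1)\neq0$ for every divisor $d$ of $N$ such that $N/d$ is not a prime power, then $\sum_{d\mid N}\mu(d)\,a_{N/d}(q^d)\equiv0\pmod{[N]_q}$.
   Context: $\mu$ is the Möbius function, $[n]_q=1+q+\dots+q^{n-1}$; polynomial congruences modulo $[n]_q$ mean divisibility of the difference by $[n]_q$ in $\mathbb{Z}[q]$. A sequence $(a_n(q))$ in $\mathbb{Z}[q]$ is a $q$-Euler–Gauss sequence if for all $n\ge1$, $\prod_{d\mid n,\,\mu(d)=1}a_{n/d}(q^d)\equiv\prod_{d\mid n,\,\mu(d)=-1}a_{n/d}(q^d)\pmod{[n]_q}$. "$N/d$ is not a prime power" means $N/d$ has at least two distinct prime divisors ($1=p^0$ counts as a prime power). *)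

theory Defs
  imports "HOL-Computational_Algebra.Computational_Algebra"
begin

(* Moebius function on positive integers (value at 0 irrelevant; set to 0) *)
definition moebius :: "nat \<Rightarrow> int" where
  "moebius n = (if n = 0 \<or> \<not> squarefree n then 0 else (-1) ^ card (prime_factors n))"

definition qint :: "nat \<Rightarrow> int poly" where
  "qint n = (\<Sum>i<n. monom 1 i)"

definition qsubst :: "int poly \<Rightarrow> nat \<Rightarrow> int poly" where
  "qsubst p d = pcompose p (monom 1 d)"

definition q_euler_gauss :: "(nat \<Rightarrow> int poly) \<Rightarrow> bool" where
  "q_euler_gauss a \<longleftrightarrow> (\<forall>n\<ge>1.
     qint n dvd
       (\<Prod>d\<in>{d. d dvd n \<and> moebius d = 1}. qsubst (a (n div d)) d)
     - (\<Prod>d\<in>{d. d dvd n \<and> moebius d = -1}. qsubst (a (n div d)) d))"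

end

theory Submission
  imports Defs
begin

definition ev :: "int poly \<Rightarrow> complex \<Rightarrow> complex" where
  "ev p z = poly (map_poly of_int p) z"

lemma ev_0[simp]: "ev 0 z = 0" by (simp add: ev_def)

lemma ev_pCons[simp]: "ev (pCons a p) z = of_int a + z * ev p z"
  by (simp add: ev_def map_poly_pCons)

lemma ev_const[simp]: "ev [:a:] z = of_int a" by simp

lemma ev_1[simp]: "ev 1 z = 1" by (simp add: one_pCons)

lemma ev_add[simp]: "ev (p + q) z = ev p z + ev q z"
proof (induction p arbitrary: q rule: pCons_induct)
  case 0 then show ?case by simp
next
  case (pCons a p)
  obtain b q' where q: "q = pCons b q'" by (cases q)
  show ?case using pCons(2)[of q'] by (simp add: q algebra_simps)
qed

lemma ev_uminus[simp]: "ev (- p) z = - ev p z"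
  using ev_add[of p "-p" z] by (simp add: eq_neg_iff_add_eq_0 add.commute)

lemma ev_diff[simp]: "ev (p - q) z = ev p z - ev q z"
  using ev_add[of p "-q" z] by simp

lemma ev_smult[simp]: "ev (smult c p) z = of_int c * ev p z"
  by (induction p rule: pCons_induct) (simp_all add: algebra_simps)

lemma ev_mult[simp]: "ev (p * q) z = ev p z * ev q z"
  by (induction p rule: pCons_induct) (simp_all add: mult_pCons_left algebra_simps)

lemma ev_pcompose: "ev (pcompose p q) z = ev p (ev q z)"
  by (induction p rule: pCons_induct) (simp_all add: pcompose_pCons)

lemma ev_monom1: "ev (monom 1 n) z = z ^ n"
  by (induction n) (simp_all add: monom_Suc monom_0)

lemma ev_qsubst: "ev (qsubst p d) z = ev p (z ^ d)"
  by (simp add: qsubst_def ev_pcompose ev_monom1)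

lemma ev_sum: "ev (\<Sum>i\<in>A. f i) z = (\<Sum>i\<in>A. ev (f i) z)"
  by (induction A rule: infinite_finite_induct) simp_all

lemma ev_prod: "ev (\<Prod>i\<in>A. f i) z = (\<Prod>i\<in>A. ev (f i) z)"
  by (induction A rule: infinite_finite_induct) simp_all

lemma ev_one_point: "ev p 1 = of_int (poly p 1)"
  by (induction p rule: pCons_induct) simp_all

lemma coeff_qint: "coeff (qint n) i = (if i < n then 1 else 0)"
  by (simp add: qint_def coeff_sum coeff_monom)

lemma degree_qint: "n \<ge> 1 \<Longrightarrow> degree (qint n) = n - 1"
proof (rule antisym)
  show "degree (qint n) \<le> n - 1" if "n \<ge> 1"
    by (rule degree_le) (auto simp: coeff_qint)
  show "n - 1 \<le> degree (qint n)" if "n \<ge> 1"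
    by (rule le_degree) (use that in \<open>simp add: coeff_qint\<close>)
qed

lemma ev_qint: "ev (qint n) z = (\<Sum>i<n. z ^ i)"
  by (simp add: qint_def ev_sum ev_monom1)

lemma ev_qint_root: "z ^ n = 1 \<Longrightarrow> z \<noteq> 1 \<Longrightarrow> ev (qint n) z = 0"
  by (simp add: ev_qint sum_gp_strict)

lemma dvd_qint:
  assumes N: "N \<ge> 1" and H: "\<And>z. z ^ N = 1 \<Longrightarrow> z \<noteq> 1 \<Longrightarrow> ev f z = 0"
  shows "qint N dvd f"
proof -
  define g where "g = qint N"
  have dg: "degree g = N - 1" using degree_qint[OF N] by (simp add: g_def)
  have lc: "coeff g (degree g) = 1" unfolding dg unfolding g_def coeff_qint using N by simp
  hence g0: "g \<noteq> 0" by auto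
  obtain q r where qr: "pseudo_divmod f g = (q, r)" by (cases "pseudo_divmod f g") auto
  from pseudo_divmod[OF g0 qr] lc have fe: "f = g * q + r" and rd: "r = 0 \<or> degree r < degree g"
    by simp_all
  have "r = 0"
  proof (rule ccontr)
    assume r0: "r \<noteq> 0"
    define R where "R = map_poly (of_int :: int \<Rightarrow> complex) r"
    have R0: "R \<noteq> 0" using r0 unfolding R_def
      by (subst map_poly_eq_0_iff) auto
    have sub: "{z::complex. z ^ N = 1} - {1} \<subseteq> {x. poly R x = 0}"
    proof
      fix z :: complex assume "z \<in> {z. z ^ N = 1} - {1}"
      hence z: "z ^ N = 1" "z \<noteq> 1" by auto
      have "ev f z = 0" using H z by blast
      moreover have "ev g z = 0" using ev_qint_root z by (simp add: g_def)
      ultimately have "ev r z = 0" using fe by (metis add_0 ev_add ev_mult mult_zero_left)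
      thus "z \<in> {x. poly R x = 0}" by (simp add: R_def ev_def)
    qed
    have cR: "card ({z::complex. z ^ N = 1} - {1}) = N - 1"
      using card_roots_unity_eq[of N] N by (subst card_Diff_singleton_if) (auto simp: finite_roots_unity N)
    have "card ({z::complex. z ^ N = 1} - {1}) \<le> card {x. poly R x = 0}"
      by (intro card_mono poly_roots_finite R0 sub)
    also have "\<dots> \<le> degree R" by (rule card_poly_roots_bound[OF R0])
    also have "\<dots> \<le> degree r" unfolding R_def by (rule map_poly_degree_leq)
    finally show False using cR rd r0 dg by linarith
  qed
  thus ?thesis using fe by (simp add: g_def)
qed

lemma moebius_pos: "moebius d \<noteq> 0 \<Longrightarrow> d > 0 \<and> squarefree d"
  by (auto simp: moebius_def split: if_splits)

lemma moebius_vals: "moebius d = 0 \<or> moebius d = 1 \<or> moebius d = -1"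
  by (auto simp: moebius_def minus_one_power_iff)

lemma moebius_1[simp]: "moebius 1 = 1"
  by (simp add: moebius_def)

lemma moebius_mult_prime:
  assumes p: "prime p" and d: "d > 0" "squarefree d" and np: "\<not> p dvd d"
  shows "moebius (d * p) = - moebius d"
proof -
  have cop: "coprime d p" using p np by (metis prime_imp_coprime coprime_commute)
  have sq: "squarefree (d * p)"
    by (rule squarefree_mult_coprime[OF cop d(2)]) (simp add: p squarefree_prime_elem)
  have pf: "prime_factors (d * p) = insert p (prime_factors d)"
    using d p by (subst prime_factors_product) (auto simp: prime_prime_factors)
  have "p \<notin> prime_factors d" using np by auto
  hence "card (prime_factors (d * p)) = Suc (card (prime_factors d))"
    by (simp add: pf)
  thus ?thesis using sq d p by (simp add: moebius_def prime_gt_0_nat)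
qed

lemma lcm_mult_coprime_dvd:
  fixes e d p :: nat
  shows "coprime d p \<Longrightarrow> p dvd e \<Longrightarrow> lcm e (d * p) = lcm e d"
  by (metis (no_types, lifting) ext dvd_triv_right lcm.assoc lcm.commute
    lcm_coprime lcm_proj2_iff lcm_proj2_iff_nat)

definition toggle :: "nat \<Rightarrow> nat \<Rightarrow> nat" where
  "toggle p d = (if p dvd d then d div p else d * p)"

lemma toggle_props:
  assumes p: "prime p" "p dvd n" and d: "d dvd n" "moebius d \<noteq> 0"
  shows "toggle p d dvd n" "moebius (toggle p d) = - moebius d" "toggle p (toggle p d) = d"
    "p dvd e \<Longrightarrow> lcm e (toggle p d) = lcm e d"
proof -
  have d0: "d > 0" and sq: "squarefree d" using moebius_pos[OF d(2)] by auto
  have p1: "p > 1" using p prime_gt_1_nat by blast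
  have "toggle p d dvd n \<and> moebius (toggle p d) = - moebius d \<and> toggle p (toggle p d) = d
     \<and> (p dvd e \<longrightarrow> lcm e (toggle p d) = lcm e d)"
  proof (cases "p dvd d")
    case True
    obtain k where k: "d = k * p" using True by (metis dvd_def mult.commute)
    have k0: "k > 0" using d0 k by simp
    have sqk: "squarefree k" using sq k squarefree_multD by blast
    have npk: "\<not> p dvd k"
    proof
      assume "p dvd k"
      then have "p * p dvd d" using k by auto
      then have "p ^ 2 dvd d" by (simp add: power2_eq_square)
      then show False using sq p1 unfolding squarefree_def by auto
    qed
    have tk: "toggle p d = k" using True k p1 by (simp add: toggle_def)
    have "moebius d = - moebius k" using moebius_mult_prime[OF p(1) k0 sqk npk] k by simp
    moreover have "k dvd n" using d(1) k by (metis dvd_mult_left)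
    moreover have "toggle p k = d" using npk k by (simp add: toggle_def)
    moreover have "p dvd e \<longrightarrow> lcm e k = lcm e d"
      using k npk p(1) lcm_mult_coprime_dvd[of k p e]
      by (metis prime_imp_coprime coprime_commute)
    ultimately show ?thesis using tk by simp
  next
    case False
    have tk: "toggle p d = d * p" using False by (simp add: toggle_def)
    have cop: "coprime p d" using p False by (metis prime_imp_coprime)
    have "d * p dvd n" using cop p(2) d(1) by (simp add: coprime_commute divides_mult)
    moreover have "moebius (d * p) = - moebius d" using moebius_mult_prime[OF p(1) d0 sq False] .
    moreover have "toggle p (d * p) = d" using p1 by (simp add: toggle_def)
    moreover have "p dvd e \<longrightarrow> lcm e (d * p) = lcm e d"
      using lcm_mult_coprime_dvd cop by (simp add: coprime_commute)
    ultimately show ?thesis using tk by simp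
  qed
  thus "toggle p d dvd n" "moebius (toggle p d) = - moebius d" "toggle p (toggle p d) = d"
    "p dvd e \<Longrightarrow> lcm e (toggle p d) = lcm e d" by auto
qed

lemma dvd_mult_iff_div_gcd:
  fixes e d k :: nat
  assumes "0 < e" shows "e dvd d * k \<longleftrightarrow> e div gcd e d dvd k"
proof -
  define g where "g = gcd e d"
  have g0: "g > 0" using assms by (simp add: g_def)
  have e: "e = g * (e div g)" and d: "d = g * (d div g)" by (simp_all add: g_def)
  have cop: "coprime (e div g) (d div g)" using assms div_gcd_coprime[of e d] by (simp add: g_def)
  have "e dvd d * k \<longleftrightarrow> g * (e div g) dvd g * ((d div g) * k)"
    using e d by (metis mult.assoc)
  also have "\<dots> \<longleftrightarrow> (e div g) dvd (d div g) * k" using g0 by simp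
  also have "\<dots> \<longleftrightarrow> (e div g) dvd k" using cop by (simp add: coprime_dvd_mult_right_iff)
  finally show ?thesis by (simp add: g_def)
qed

lemma lcm_eq_div_gcd: "lcm (e::nat) d = d * (e div gcd e d)"
  by (simp add: lcm_nat_def div_mult_swap mult.commute)

definition prim :: "nat \<Rightarrow> complex \<Rightarrow> bool" where
  "prim e z \<longleftrightarrow> 0 < e \<and> (\<forall>k. z ^ k = 1 \<longleftrightarrow> e dvd k)"

lemma prim_exists:
  assumes "z ^ N = 1" "N > 0" shows "\<exists>e. prim e z \<and> e dvd N"
proof -
  define e where "e = (LEAST k. 0 < k \<and> z ^ k = 1)"
  have e: "0 < e \<and> z ^ e = 1" unfolding e_def by (rule LeastI[of _ N]) (use assms in auto)
  have min: "\<And>k. 0 < k \<Longrightarrow> k < e \<Longrightarrow> z ^ k \<noteq> 1" unfolding e_def using not_less_Least by blast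
  have "z ^ k = 1 \<longleftrightarrow> e dvd k" for k
  proof
    assume zk: "z ^ k = 1"
    have "z ^ k = z ^ (e * (k div e) + k mod e)" by simp
    also have "\<dots> = (z ^ e) ^ (k div e) * z ^ (k mod e)"
      by (simp only: power_add power_mult)
    finally have "z ^ k = (z ^ e) ^ (k div e) * z ^ (k mod e)" .
    hence "z ^ (k mod e) = 1" using zk e by simp
    hence "k mod e = 0" using min[of "k mod e"] e by (meson mod_less_divisor neq0_conv)
    thus "e dvd k" by auto
  next
    assume "e dvd k" then obtain c where "k = e * c" ..
    thus "z ^ k = 1" using e by (simp add: power_mult)
  qed
  thus ?thesis using e assms by (auto simp: prim_def)
qed

lemma prim_one: assumes "prim e z" shows "z = 1 \<longleftrightarrow> e = 1"
proof -
  have "z ^ 1 = 1 \<longleftrightarrow> e dvd 1" using assms unfolding prim_def by blast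
  thus ?thesis by simp
qed

lemma prim_power:
  assumes "prim e z" shows "prim (e div gcd e d) (z ^ d)"
proof -
  have e0: "0 < e" using assms by (simp add: prim_def)
  have "0 < e div gcd e d" using e0 by (simp add: div_greater_zero_iff gcd_le1_nat)
  moreover have "(z ^ d) ^ k = 1 \<longleftrightarrow> e div gcd e d dvd k" for k
  proof -
    have "(z ^ d) ^ k = z ^ (d * k)" by (simp add: power_mult)
    moreover have "z ^ (d * k) = 1 \<longleftrightarrow> e dvd d * k" using assms by (simp add: prim_def)
    ultimately show ?thesis using dvd_mult_iff_div_gcd[OF e0, of d k] by simp
  qed
  ultimately show ?thesis by (simp add: prim_def)
qed

lemma step_div:
  fixes n d e :: nat
  assumes "0 < n" "d dvd n" "e dvd n"
  shows "(e div gcd e d) dvd (n div d)" "(n div d) div (e div gcd e d) = n div lcm e d"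
proof -
  have "lcm e d dvd n" using assms by simp
  then obtain c where c: "n = lcm e d * c" ..
  have L: "lcm e d = d * (e div gcd e d)" by (rule lcm_eq_div_gcd)
  have d0: "d > 0" using assms by (metis dvd_0_left_iff neq0_conv)
  have nd: "n div d = (e div gcd e d) * c" using c L d0 by simp
  thus "(e div gcd e d) dvd (n div d)" by simp
  show "(n div d) div (e div gcd e d) = n div lcm e d"
    by (simp add: L div_mult2_eq)
qed

lemma toggle_T:
  assumes p: "prime p" "p dvd n"
  shows "bij_betw (toggle p) {d. d dvd n \<and> moebius d \<noteq> 0} {d. d dvd n \<and> moebius d \<noteq> 0}"
proof (rule bij_betw_byWitness[where f' = "toggle p"])
  note t = toggle_props(1-3)[OF p]
  show "\<forall>a\<in>{d. d dvd n \<and> moebius d \<noteq> 0}. toggle p (toggle p a) = a" using t by simp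
  show "\<forall>a\<in>{d. d dvd n \<and> moebius d \<noteq> 0}. toggle p (toggle p a) = a" using t by simp
  show "toggle p ` {d. d dvd n \<and> moebius d \<noteq> 0} \<subseteq> {d. d dvd n \<and> moebius d \<noteq> 0}"
  proof (rule image_subsetI)
    fix d assume "d \<in> {d. d dvd n \<and> moebius d \<noteq> 0}"
    thus "toggle p d \<in> {d. d dvd n \<and> moebius d \<noteq> 0}" using t[of d] by simp
  qed
  show "toggle p ` {d. d dvd n \<and> moebius d \<noteq> 0} \<subseteq> {d. d dvd n \<and> moebius d \<noteq> 0}"
  proof (rule image_subsetI)
    fix d assume "d \<in> {d. d dvd n \<and> moebius d \<noteq> 0}"
    thus "toggle p d \<in> {d. d dvd n \<and> moebius d \<noteq> 0}" using t[of d] by simp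
  qed
qed

lemma toggle_S:
  assumes p: "prime p" "p dvd n"
  shows "bij_betw (toggle p) {d. d dvd n \<and> moebius d = 1} {d. d dvd n \<and> moebius d = -1}"
proof (rule bij_betw_byWitness[where f' = "toggle p"])
  note t = toggle_props(1-3)[OF p]
  show "\<forall>a\<in>{d. d dvd n \<and> moebius d = 1}. toggle p (toggle p a) = a" using t by simp
  show "\<forall>a\<in>{d. d dvd n \<and> moebius d = -1}. toggle p (toggle p a) = a" using t by simp
  show "toggle p ` {d. d dvd n \<and> moebius d = 1} \<subseteq> {d. d dvd n \<and> moebius d = -1}"
  proof (rule image_subsetI)
    fix d assume "d \<in> {d. d dvd n \<and> moebius d = 1}"
    thus "toggle p d \<in> {d. d dvd n \<and> moebius d = -1}" using t[of d] by simp
  qed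
  show "toggle p ` {d. d dvd n \<and> moebius d = -1} \<subseteq> {d. d dvd n \<and> moebius d = 1}"
  proof (rule image_subsetI)
    fix d assume "d \<in> {d. d dvd n \<and> moebius d = -1}"
    thus "toggle p d \<in> {d. d dvd n \<and> moebius d = 1}" using t[of d] by simp
  qed
qed

lemma toggle_sum_zero:
  fixes g :: "nat \<Rightarrow> complex"
  assumes n: "n > 0" and p: "prime p" "p dvd n"
    and g: "\<And>d. d dvd n \<Longrightarrow> moebius d \<noteq> 0 \<Longrightarrow> g (toggle p d) = g d"
  shows "(\<Sum>d | d dvd n. of_int (moebius d) * g d) = 0"
proof -
  let ?T = "{d. d dvd n \<and> moebius d \<noteq> 0}"
  let ?h = "\<lambda>d. of_int (moebius d) * g d"
  have fin: "finite {d. d dvd n}" using n by (simp add: finite_divisors_nat)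
  have eq1: "(\<Sum>d | d dvd n. ?h d) = (\<Sum>d\<in>?T. ?h d)"
  proof (rule sum.mono_neutral_right)
    show "finite {d. d dvd n}" by (rule fin)
    show "?T \<subseteq> {d. d dvd n}" by blast
    show "\<forall>i\<in>{d. d dvd n} - ?T. ?h i = 0" by simp
  qed
  have "(\<Sum>d\<in>?T. ?h d) = (\<Sum>d\<in>?T. ?h (toggle p d))"
    by (rule sum.reindex_bij_betw[symmetric, OF toggle_T[OF p]])
  also have "\<dots> = (\<Sum>d\<in>?T. - ?h d)"
  proof (rule sum.cong)
    fix d assume "d \<in> ?T"
    hence d: "d dvd n" "moebius d \<noteq> 0" by auto
    show "?h (toggle p d) = - ?h d" using toggle_props(2)[OF p d] g[OF d] by simp
  qed simp
  also have "\<dots> = - (\<Sum>d\<in>?T. ?h d)" by (simp add: sum_negf)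
  finally have "(\<Sum>d\<in>?T. ?h d) = 0" by simp
  with eq1 show ?thesis by simp
qed

lemma toggle_prod_eq:
  fixes g :: "nat \<Rightarrow> complex"
  assumes p: "prime p" "p dvd n"
    and g: "\<And>d. d dvd n \<Longrightarrow> moebius d \<noteq> 0 \<Longrightarrow> g (toggle p d) = g d"
  shows "(\<Prod>d\<in>{d. d dvd n \<and> moebius d = 1}. g d) = (\<Prod>d\<in>{d. d dvd n \<and> moebius d = -1}. g d)"
proof -
  have "(\<Prod>d\<in>{d. d dvd n \<and> moebius d = -1}. g d) = (\<Prod>d\<in>{d. d dvd n \<and> moebius d = 1}. g (toggle p d))"
    by (rule prod.reindex_bij_betw[symmetric, OF toggle_S[OF p]])
  also have "\<dots> = (\<Prod>d\<in>{d. d dvd n \<and> moebius d = 1}. g d)"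
  proof (rule prod.cong)
    fix d assume "d \<in> {d. d dvd n \<and> moebius d = 1}"
    thus "g (toggle p d) = g d" using g by simp
  qed simp
  finally show ?thesis by simp
qed

lemma moebius_one_card:
  assumes "moebius d = 1" "d \<noteq> 1" shows "card (prime_factors d) \<ge> 2"
proof -
  have d: "d > 0" "squarefree d" using moebius_pos[of d] assms by auto
  have "(-1 :: int) ^ card (prime_factors d) = 1" using assms d by (simp add: moebius_def)
  hence ev: "even (card (prime_factors d))" by (simp add: minus_one_power_iff split: if_splits)
  obtain p where p: "prime p" "p dvd d" using prime_factor_nat[OF assms(2)] by blast
  have "p \<in> prime_factors d" using p d by (auto simp: in_prime_factors_iff)
  hence "card (prime_factors d) \<noteq> 0" by auto
  with ev show ?thesis by presburger
qed

lemma moebius_Suc0[simp]: "moebius (Suc 0) = 1"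
  using moebius_1 by simp

lemma values_at_roots:
  assumes EG: "q_euler_gauss a" and N: "N \<ge> 1"
    and H: "\<And>d. d dvd N \<Longrightarrow> card (prime_factors (N div d)) \<ge> 2 \<Longrightarrow> poly (a d) 1 \<noteq> 0"
  shows "n dvd N \<Longrightarrow> 0 < n \<Longrightarrow> prim e z \<Longrightarrow> e dvd n \<Longrightarrow> ev (a n) z = of_int (poly (a (n div e)) 1)"
proof (induction n arbitrary: e z rule: less_induct)
  case (less n)
  note nN = less.prems(1) and n0 = less.prems(2) and pe = less.prems(3) and en = less.prems(4)
  have e0: "e > 0" using pe by (simp add: prim_def)
  show ?case
  proof (cases "e = 1")
    case True
    then have "z = 1" using prim_one[OF pe] by simp
    thus ?thesis using True by (simp add: ev_one_point)
  next
    case False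
    obtain p where p: "prime p" "p dvd e" using prime_factor_nat[OF False] by blast
    have pn: "p dvd n" using p(2) en by (rule dvd_trans)
    have z1: "z \<noteq> 1" using prim_one[OF pe] False by simp
    have zn: "z ^ n = 1" using pe en by (simp add: prim_def)
    define Sp where "Sp = {d. d dvd n \<and> moebius d = 1}"
    define Sm where "Sm = {d. d dvd n \<and> moebius d = -1}"
    define F where "F d = ev (a (n div d)) (z ^ d)" for d
    define g where "g d = (of_int (poly (a (n div lcm e d)) 1) :: complex)" for d
    have fin: "finite {d. d dvd n}" using n0 by (simp add: finite_divisors_nat)
    have finp: "finite Sp" unfolding Sp_def by (rule finite_subset[OF _ fin]) blast
    have "qint n dvd (\<Prod>d\<in>Sp. qsubst (a (n div d)) d) - (\<Prod>d\<in>Sm. qsubst (a (n div d)) d)"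
      using EG n0 unfolding q_euler_gauss_def Sp_def Sm_def by auto
    then obtain c where c: "(\<Prod>d\<in>Sp. qsubst (a (n div d)) d) - (\<Prod>d\<in>Sm. qsubst (a (n div d)) d) = qint n * c"
      by (elim dvdE)
    have "ev ((\<Prod>d\<in>Sp. qsubst (a (n div d)) d) - (\<Prod>d\<in>Sm. qsubst (a (n div d)) d)) z = 0"
      unfolding c using ev_qint_root[OF zn z1] by simp
    hence eqP: "(\<Prod>d\<in>Sp. F d) = (\<Prod>d\<in>Sm. F d)" by (simp add: ev_prod ev_qsubst F_def)
    have IHuse: "F d = g d" if d: "d dvd n" "d \<noteq> 1" for d
    proof -
      have d0: "d > 0" using d n0 by (metis dvd_0_left_iff neq0_conv)
      have lt: "n div d < n" using d0 d(2) n0 by (intro div_less_dividend) auto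
      obtain k where k: "n = d * k" using d(1) by (elim dvdE)
      have ndk: "n div d = k" using k d0 by simp
      have "k dvd N" using k nN by (metis dvd_mult_left dvd_trans mult.commute)
      hence ndN: "n div d dvd N" by (simp add: ndk)
      have nd0: "0 < n div d" using k n0 ndk by (metis mult_is_0 neq0_conv)
      have pe': "prim (e div gcd e d) (z ^ d)" by (rule prim_power[OF pe])
      have sd: "(e div gcd e d) dvd (n div d)" "(n div d) div (e div gcd e d) = n div lcm e d"
        using step_div[OF n0 d(1) en] by auto
      have "ev (a (n div d)) (z ^ d) = of_int (poly (a ((n div d) div (e div gcd e d))) 1)"
        by (rule less.IH[OF lt ndN nd0 pe' sd(1)])
      thus ?thesis unfolding F_def g_def sd(2) .
    qed
    have one_Sp: "1 \<in> Sp" unfolding Sp_def by simp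
    have one_Sm: "1 \<notin> Sm" unfolding Sm_def by simp
    have "(\<Prod>d\<in>Sp. F d) = F 1 * (\<Prod>d\<in>Sp-{1}. F d)" by (rule prod.remove[OF finp one_Sp])
    also have "(\<Prod>d\<in>Sp-{1}. F d) = (\<Prod>d\<in>Sp-{1}. g d)"
      by (rule prod.cong) (auto simp: Sp_def intro: IHuse)
    also have "F 1 = ev (a n) z" by (simp add: F_def)
    finally have L: "(\<Prod>d\<in>Sp. F d) = ev (a n) z * (\<Prod>d\<in>Sp-{1}. g d)" .
    have "(\<Prod>d\<in>Sm. F d) = (\<Prod>d\<in>Sm. g d)"
      by (rule prod.cong) (use one_Sm in \<open>auto simp: Sm_def intro: IHuse\<close>)
    also have "\<dots> = (\<Prod>d\<in>Sp. g d)" unfolding Sp_def Sm_def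
    proof (rule toggle_prod_eq[OF p(1) pn, symmetric])
      fix d assume "d dvd n" "moebius d \<noteq> 0"
      thus "g (toggle p d) = g d" unfolding g_def using toggle_props(4)[OF p(1) pn _ _ p(2)] by simp
    qed
    also have "\<dots> = g 1 * (\<Prod>d\<in>Sp-{1}. g d)" by (rule prod.remove[OF finp one_Sp])
    finally have R: "(\<Prod>d\<in>Sm. F d) = g 1 * (\<Prod>d\<in>Sp-{1}. g d)" .
    have nz: "(\<Prod>d\<in>Sp-{1}. g d) \<noteq> 0"
    proof -
      have "g d \<noteq> 0" if d: "d \<in> Sp - {1}" for d
      proof -
        have dn: "d dvd n" and md: "moebius d = 1" and d1: "d \<noteq> 1" using d by (auto simp: Sp_def)
        have Ln: "lcm e d dvd n" using dn en by simp
        then obtain m' where m': "n = lcm e d * m'" by (elim dvdE)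
        define m where "m = n div lcm e d"
        have L0: "lcm e d > 0" using Ln n0 by (metis dvd_0_left_iff neq0_conv)
        have mm: "m = m'" using m' L0 by (simp add: m_def)
        obtain c' where c': "N = n * c'" using nN by (elim dvdE)
        have m0: "m > 0" using mm m' n0 by (metis mult_is_0 neq0_conv)
        have NE: "N = m * (lcm e d * c')" using c' m' mm by (simp add: mult_ac)
        have mN: "m dvd N" using NE by simp
        have Nm: "N div m = lcm e d * c'" using NE m0 by simp
        have Nm0: "N div m \<noteq> 0" using Nm NE N by (metis mult_is_0 not_one_le_zero)
        have "d dvd N div m" unfolding Nm using dvd_lcm2[of d e] by (rule dvd_mult2)
        hence sub: "prime_factors d \<subseteq> prime_factors (N div m)" using Nm0 by (rule dvd_prime_factors[rotated])
        have "2 \<le> card (prime_factors d)" by (rule moebius_one_card[OF md d1])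
        also have "\<dots> \<le> card (prime_factors (N div m))" by (rule card_mono[OF _ sub]) simp
        finally have "poly (a m) 1 \<noteq> 0" by (rule H[OF mN])
        thus ?thesis by (simp add: g_def m_def)
      qed
      thus ?thesis using finp by (simp add: prod_zero_iff)
    qed
    have g1: "g 1 = of_int (poly (a (n div e)) 1)" by (simp add: g_def)
    show ?thesis using eqP L R nz g1 by simp
  qed
qed

theorem theorem11:
  fixes a :: "nat \<Rightarrow> int poly" and N :: nat
  assumes "q_euler_gauss a"
    and "N \<ge> 1"
    and "\<And>d. d dvd N \<Longrightarrow> card (prime_factors (N div d)) \<ge> 2 \<Longrightarrow> poly (a d) 1 \<noteq> 0"
  shows "qint N dvd (\<Sum>d | d dvd N. smult (moebius d) (qsubst (a (N div d)) d))"
proof (rule dvd_qint[OF assms(2)])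
  fix z :: complex assume zN: "z ^ N = 1" and z1: "z \<noteq> 1"
  have N0: "N > 0" using assms(2) by simp
  obtain e where pe: "prim e z" "e dvd N" using prim_exists[OF zN N0] by auto
  have e1: "e \<noteq> 1" using prim_one[OF pe(1)] z1 by simp
  obtain p where p: "prime p" "p dvd e" using prime_factor_nat[OF e1] by blast
  have pN: "p dvd N" using p(2) pe(2) by (rule dvd_trans)
  define g where "g d = (of_int (poly (a (N div lcm e d)) 1) :: complex)" for d
  have "ev (\<Sum>d | d dvd N. smult (moebius d) (qsubst (a (N div d)) d)) z
      = (\<Sum>d | d dvd N. of_int (moebius d) * ev (a (N div d)) (z ^ d))"
    by (simp add: ev_sum ev_qsubst)
  also have "\<dots> = (\<Sum>d | d dvd N. of_int (moebius d) * g d)"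
  proof (rule sum.cong)
    fix d assume "d \<in> {d. d dvd N}"
    hence d: "d dvd N" by simp
    have d0: "d > 0" using d N0 by (metis dvd_0_left_iff neq0_conv)
    obtain k where k: "N = d * k" using d by (elim dvdE)
    have ndk: "N div d = k" using k d0 by simp
    have ndN: "N div d dvd N" using k by (simp add: ndk)
    have nd0: "0 < N div d" using k N0 ndk by (metis mult_is_0 neq0_conv)
    have pe': "prim (e div gcd e d) (z ^ d)" by (rule prim_power[OF pe(1)])
    have sd: "(e div gcd e d) dvd (N div d)" "(N div d) div (e div gcd e d) = N div lcm e d"
      using step_div[OF N0 d pe(2)] by auto
    have "ev (a (N div d)) (z ^ d) = of_int (poly (a ((N div d) div (e div gcd e d))) 1)"
      by (rule values_at_roots[OF assms ndN nd0 pe' sd(1)])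
    thus "of_int (moebius d) * ev (a (N div d)) (z ^ d) = of_int (moebius d) * g d"
      unfolding g_def sd(2) by simp
  qed simp
  also have "\<dots> = 0"
  proof (rule toggle_sum_zero[OF N0 p(1) pN])
    fix d assume "d dvd N" "moebius d \<noteq> 0"
    thus "g (toggle p d) = g d" unfolding g_def using toggle_props(4)[OF p(1) pN _ _ p(2)] by simp
  qed
  finally show "ev (\<Sum>d | d dvd N. smult (moebius d) (qsubst (a (N div d)) d)) z = 0" .
qed

end
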